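(* Let $k$ be a positive integer, let $f$ be a $(2k+1)$-coloring automorphism, and let $L$ be a link with $\det L\neq0$ admitting non-trivial $(2k+1)$-colorings. Then no set $S\subseteq\{f(0),f(1),\dots,f(k)\}$ is a $(2k+1)$-sufficient set of colors for $L$.
   Context: For a positive integer $n$, an $n$-coloring of a link diagram is an assignment of an element of $\mathbf{Z}/n\mathbf{Z}$ to each arc such that at every crossing, with over-arc color $b$ and under-arc colors $a,c$, $2b-a-c\equiv 0\pmod n$; it is non-trivial if at least two distinct colors are used. An $n$-coloring automorphism is a permutation $f$ of $\mathbf{Z}/n\mathbf{Z}$ satisfying $f(2b-a)=2f(b)-f(a)$ for all $a,b$. An $n$-sufficient set of colors for $L$ is a set of residues mod $n$ such that some diagram of $L$ admits a non-trivial $n$-coloring using only colors from this set. $\det L$ is the determinant of $L$. *)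

theory Defs
  imports "Jordan_Normal_Form.Determinant" "Jordan_Normal_Form.DL_Submatrix"
begin

text \<open>Combinatorial model of a link diagram: a pair (n, cs) where the arcs are
  0, ..., n-1 and cs lists the crossings; a crossing (b, a, c) has over-arc b
  and under-arcs a and c.\<close>

type_synonym diagram = "nat \<times> (nat \<times> nat \<times> nat) list"

definition arcs :: "diagram \<Rightarrow> nat set" where
  "arcs D = {..<fst D}"

definition crossings :: "diagram \<Rightarrow> (nat \<times> nat \<times> nat) list" where
  "crossings D = snd D"

definition well_formed_diagram :: "diagram \<Rightarrow> bool" where
  "well_formed_diagram D \<longleftrightarrow> fst D \<ge> 1 \<and>
     (\<forall>(b, a, c) \<in> set (crossings D). b \<in> arcs D \<and> a \<in> arcs D \<and> c \<in> arcs D)"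

definition n_coloring :: "nat \<Rightarrow> diagram \<Rightarrow> (nat \<Rightarrow> int) \<Rightarrow> bool" where
  "n_coloring n D cl \<longleftrightarrow>
     (\<forall>i \<in> arcs D. cl i \<in> {0..<int n}) \<and>
     (\<forall>(b, a, c) \<in> set (crossings D). (2 * cl b - cl a - cl c) mod int n = 0)"

definition nontrivial_coloring :: "diagram \<Rightarrow> (nat \<Rightarrow> int) \<Rightarrow> bool" where
  "nontrivial_coloring D cl \<longleftrightarrow> (\<exists>i \<in> arcs D. \<exists>j \<in> arcs D. cl i \<noteq> cl j)"

definition coloring_automorphism :: "nat \<Rightarrow> (int \<Rightarrow> int) \<Rightarrow> bool" where
  "coloring_automorphism n f \<longleftrightarrow> bij_betw f {0..<int n} {0..<int n} \<and>
     (\<forall>a \<in> {0..<int n}. \<forall>b \<in> {0..<int n}. f ((2 * b - a) mod int n) = (2 * f b - f a) mod int n)"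

definition sufficient_for_diagram :: "nat \<Rightarrow> int set \<Rightarrow> diagram \<Rightarrow> bool" where
  "sufficient_for_diagram n S D \<longleftrightarrow>
     (\<exists>cl. n_coloring n D cl \<and> nontrivial_coloring D cl \<and> (\<forall>i \<in> arcs D. cl i \<in> S))"

definition coloring_matrix :: "diagram \<Rightarrow> int mat" where
  "coloring_matrix D = mat (length (crossings D)) (fst D)
     (\<lambda>(r, j). case crossings D ! r of (b, a, c) \<Rightarrow>
        2 * (if j = b then 1 else 0) - (if j = a then 1 else 0) - (if j = c then 1 else 0))"

text \<open>Determinant of the diagram: the non-negative generator of the ideal spanned by
  all (n-1) x (n-1) minors of the coloring matrix (n = number of arcs), i.e. of
  the first elementary ideal of the coloring module. For a classical diagram with
  as many crossings as arcs this is the absolute value of any first minor.\<close>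

definition diagram_det :: "diagram \<Rightarrow> int" where
  "diagram_det D = Gcd {det (submatrix (coloring_matrix D) I J) | I J.
      I \<subseteq> {..<length (crossings D)} \<and> J \<subseteq> {..<fst D} \<and>
      card I = fst D - 1 \<and> card J = fst D - 1}"

end

theory Submission
  imports Defs
begin

lemma pick_bij:
  assumes "finite J"
  shows "bij_betw (pick J) {..<card J} J"
proof -
  have inj: "inj_on (pick J) {..<card J}"
    unfolding inj_on_def by (metis lessThan_iff nat_neq_iff pick_mono)
  have sub: "pick J ` {..<card J} \<subseteq> J" using pick_in_set by auto
  have "card (pick J ` {..<card J}) = card J" using card_image[OF inj] by simp
  hence "pick J ` {..<card J} = J" using card_subset_eq[OF assms sub] by simp
  thus ?thesis using inj unfolding bij_betw_def by simp
qed

lemma minor_zero: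
  fixes v :: "nat \<Rightarrow> int"
  assumes col: "\<forall>(b,a,c)\<in>set (crossings D). 2*v b - v a - v c = 0"
    and wf: "well_formed_diagram D"
    and I: "I \<subseteq> {..<length (crossings D)}" and J: "J \<subseteq> {..<fst D}"
    and cI: "card I = fst D - 1" and cJ: "card J = fst D - 1"
    and ij: "i \<in> arcs D" "j \<in> arcs D" "v i \<noteq> v j"
  shows "det (submatrix (coloring_matrix D) I J) = 0"
proof -
  define N where "N = fst D"
  define cs where "cs = crossings D"
  define M where "M = coloring_matrix D"
  define m where "m = N - 1"
  have N1: "N \<ge> 1" using wf unfolding well_formed_diagram_def N_def by simp
  have finJ: "finite J" using J finite_subset by blast
  have "J \<noteq> {..<N}" using cJ N1 unfolding N_def by auto
  then obtain j0 where j0: "j0 < N" "j0 \<notin> J" using J unfolding N_def by auto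
  have Jeq: "J = {..<N} - {j0}"
  proof -
    have "finite ({..<N} - {j0})" by simp
    moreover have "J \<subseteq> {..<N} - {j0}" using J j0 unfolding N_def by auto
    moreover have "card J = card ({..<N} - {j0})" using cJ j0 unfolding N_def by simp
    ultimately show ?thesis using card_subset_eq by blast
  qed
  define u where "u x = v x - v j0" for x
  obtain i' where i': "i' \<in> J" "u i' \<noteq> 0"
  proof (cases "v i = v j0")
    case True
    then have "v j \<noteq> v j0" using ij by simp
    moreover have "j \<in> J" using ij(2) calculation Jeq unfolding arcs_def N_def by auto
    ultimately show ?thesis using that unfolding u_def by auto
  next
    case False
    moreover have "i \<in> J" using ij(1) calculation Jeq unfolding arcs_def N_def by auto
    ultimately show ?thesis using that unfolding u_def by auto
  qed
  have dimM: "dim_row M = length cs" "dim_col M = N"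
    unfolding M_def coloring_matrix_def cs_def N_def by auto
  have setI: "{x. x < dim_row M \<and> x \<in> I} = I" using I dimM unfolding cs_def by auto
  have setJ: "{x. x < dim_col M \<and> x \<in> J} = J" using J dimM unfolding N_def by auto
  define A where "A = submatrix M I J"
  have A: "A \<in> carrier_mat m m"
    unfolding A_def carrier_mat_def using cI cJ unfolding m_def N_def by (simp add: dim_submatrix setI setJ)
  have bij: "bij_betw (pick J) {..<m} J" using pick_bij[OF finJ] cJ unfolding m_def N_def by simp
  define w where "w = vec m (\<lambda>s. u (pick J s))"
  have w: "w \<in> carrier_vec m" unfolding w_def by simp
  have wnz: "w \<noteq> 0\<^sub>v m"
  proof
    assume "w = 0\<^sub>v m"
    obtain s where s: "s < m" "pick J s = i'" using bij i' unfolding bij_betw_def by (metis imageE lessThan_iff)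
    have "w $ s = u i'" using s unfolding w_def by simp
    with \<open>w = 0\<^sub>v m\<close> s i' show False by simp
  qed
  have Aw: "A *\<^sub>v w = 0\<^sub>v m"
  proof (rule eq_vecI)
    show "dim_vec (A *\<^sub>v w) = dim_vec (0\<^sub>v m)" using A by simp
    fix t assume "t < dim_vec (0\<^sub>v m)"
    hence t: "t < m" by simp
    have tI: "t < card I" using t cI unfolding m_def N_def by simp
    define r where "r = pick I t"
    have rI: "r \<in> I" using pick_in_set tI unfolding r_def by blast
    hence r: "r < length cs" using I unfolding cs_def by auto
    obtain b a c where bac: "cs ! r = (b,a,c)" by (metis prod_cases3)
    have inset: "(b,a,c) \<in> set cs" using bac r by (metis nth_mem)
    have bacN: "b < N" "a < N" "c < N" using wf inset
      unfolding well_formed_diagram_def cs_def arcs_def N_def by auto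
    have Mrj: "M $$ (r,j') = 2 * (if j' = b then 1 else 0) - (if j' = a then 1 else 0) - (if j' = c then 1 else 0)"
      if "j' < N" for j'
      using that r bac unfolding M_def coloring_matrix_def cs_def N_def by simp
    have "(A *\<^sub>v w) $ t = (\<Sum>s<m. A $$ (t,s) * w $ s)"
      using A w t by (simp add: scalar_prod_def atLeast0LessThan)
    also have "\<dots> = (\<Sum>s<m. M $$ (r, pick J s) * u (pick J s))"
    proof (rule sum.cong[OF refl])
      fix s assume s: "s \<in> {..<m}"
      have "A $$ (t,s) = M $$ (r, pick J s)"
        unfolding A_def r_def using submatrix_index[of t M I s J] t s setI setJ cI cJ
        unfolding m_def N_def by simp
      thus "A $$ (t,s) * w $ s = M $$ (r, pick J s) * u (pick J s)" using s unfolding w_def by simp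
    qed
    also have "\<dots> = (\<Sum>j'\<in>J. M $$ (r, j') * u j')"
      using sum.reindex_bij_betw[OF bij, of "\<lambda>j'. M $$ (r, j') * u j'"] by simp
    also have "\<dots> = (\<Sum>j'<N. M $$ (r, j') * u j')"
    proof -
      have "(\<Sum>j'<N. M $$ (r, j') * u j') = M $$ (r, j0) * u j0 + (\<Sum>j'\<in>J. M $$ (r, j') * u j')"
        using j0 Jeq by (simp add: sum.remove)
      thus ?thesis unfolding u_def by simp
    qed
    also have "\<dots> = (\<Sum>j'<N. 2 * (if j' = b then u j' else 0) - (if j' = a then u j' else 0) - (if j' = c then u j' else 0))"
      by (rule sum.cong[OF refl]) (simp add: Mrj)
    also have "\<dots> = 2 * u b - u a - u c"
      using bacN by (simp add: sum_subtractf sum_distrib_left[symmetric])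
    also have "\<dots> = 0" using col inset unfolding u_def cs_def by auto
    finally show "(A *\<^sub>v w) $ t = 0\<^sub>v m $ t" using t by simp
  qed
  have "det A = 0" using det_0_iff_vec_prod_zero[OF A] w wnz Aw by blast
  thus ?thesis unfolding A_def M_def .
qed

theorem corollary4p1:
  fixes k :: nat and f :: "int \<Rightarrow> int" and D :: diagram
  assumes "k > 0"
    and "coloring_automorphism (2 * k + 1) f"
    and "well_formed_diagram D"
    and "diagram_det D \<noteq> 0"
    and "\<exists>cl. n_coloring (2 * k + 1) D cl \<and> nontrivial_coloring D cl"
  shows "\<forall>S \<subseteq> f ` {0..int k}. \<not> sufficient_for_diagram (2 * k + 1) S D"
proof (intro allI impI notI)
  fix S assume SS: "S \<subseteq> f ` {0..int k}" and suff: "sufficient_for_diagram (2 * k + 1) S D"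
  define n where "n = int (2*k+1)"
  obtain cl where cl: "n_coloring (2 * k + 1) D cl" "nontrivial_coloring D cl"
      "\<forall>i \<in> arcs D. cl i \<in> S"
    using suff unfolding sufficient_for_diagram_def by blast
  have fb: "bij_betw f {0..<n} {0..<n}"
    and fh: "\<And>a b. a \<in> {0..<n} \<Longrightarrow> b \<in> {0..<n} \<Longrightarrow> f ((2 * b - a) mod n) = (2 * f b - f a) mod n"
    using assms(2) unfolding coloring_automorphism_def n_def by auto
  have "\<forall>i\<in>arcs D. \<exists>x\<in>{0..int k}. f x = cl i"
  proof
    fix i assume "i \<in> arcs D"
    hence "cl i \<in> f ` {0..int k}" using cl(3) SS by (meson subsetD)
    thus "\<exists>x\<in>{0..int k}. f x = cl i" by (metis imageE)
  qed
  hence "\<forall>i\<in>arcs D. \<exists>x. x \<in> {0..int k} \<and> f x = cl i" by blast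
  from bchoice[OF this] obtain g where g0: "\<forall>i\<in>arcs D. g i \<in> {0..int k} \<and> f (g i) = cl i"
    by blast
  have g: "\<And>i. i \<in> arcs D \<Longrightarrow> g i \<in> {0..int k} \<and> f (g i) = cl i" using g0 by blast
  have gn: "g i \<in> {0..<n}" if "i \<in> arcs D" for i
  proof -
    have "0 \<le> g i" "g i \<le> int k" using g[OF that] by simp_all
    moreover have "int k < n" unfolding n_def by simp
    ultimately show ?thesis by simp
  qed
  have clr: "cl i \<in> {0..<n}" if "i \<in> arcs D" for i
  proof -
    have "\<forall>i \<in> arcs D. cl i \<in> {0..<int (2*k+1)}" using cl(1) unfolding n_coloring_def by (rule conjunct1)
    thus ?thesis using that unfolding n_def by blast
  qed
  have gcol: "\<forall>(b,a,c)\<in>set (crossings D). 2 * g b - g a - g c = 0"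
  proof (intro ballI, clarify)
    fix b a c assume inset: "(b,a,c) \<in> set (crossings D)"
    have wf: "\<forall>(b, a, c) \<in> set (crossings D). b \<in> arcs D \<and> a \<in> arcs D \<and> c \<in> arcs D"
      using assms(3) unfolding well_formed_diagram_def by (rule conjunct2)
    have arc: "b \<in> arcs D" "a \<in> arcs D" "c \<in> arcs D"
      using bspec[OF wf inset] by simp_all
    have cc: "(2 * cl b - cl a - cl c) mod n = 0"
    proof -
      have "\<forall>(b, a, c) \<in> set (crossings D). (2 * cl b - cl a - cl c) mod int (2*k+1) = 0"
        using cl(1) unfolding n_coloring_def by (rule conjunct2)
      from bspec[OF this inset] show ?thesis unfolding n_def by simp
    qed
    have "(2 * cl b - cl a) mod n = cl c mod n"
      unfolding mod_eq_dvd_iff using cc by (simp add: dvd_eq_mod_eq_0 algebra_simps)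
    also have "\<dots> = cl c" using clr[OF arc(3)] by simp
    finally have e1: "f ((2 * g b - g a) mod n) = f (g c)"
      using fh[OF gn[OF arc(2)] gn[OF arc(1)]] g arc by simp
    have n0: "n > 0" unfolding n_def by simp
    have "(2 * g b - g a) mod n \<in> {0..<n}" using n0 by simp
    hence e2: "(2 * g b - g a) mod n = g c"
      using inj_onD[OF _ e1 _ gn[OF arc(3)]] fb unfolding bij_betw_def by blast
    have gcm: "g c mod n = g c" using gn[OF arc(3)] by simp
    have "n dvd (2 * g b - g a - g c)"
      using mod_eq_dvd_iff[of "2 * g b - g a" n "g c"] e2 gcm by simp
    moreover have "\<bar>2 * g b - g a - g c\<bar> < n"
      using g[OF arc(1)] g[OF arc(2)] g[OF arc(3)] unfolding n_def by auto
    ultimately show "2 * g b - g a - g c = 0"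
      using dvd_imp_le_int[of "2 * g b - g a - g c" n] n0 by fastforce
  qed
  obtain i j where ij: "i \<in> arcs D" "j \<in> arcs D" "cl i \<noteq> cl j"
    using cl(2) unfolding nontrivial_coloring_def by blast
  have gij: "g i \<noteq> g j" using ij g[OF ij(1)] g[OF ij(2)] by auto
  have "diagram_det D = 0"
    unfolding diagram_det_def
  proof -
    have "{det (submatrix (coloring_matrix D) I J) | I J.
      I \<subseteq> {..<length (crossings D)} \<and> J \<subseteq> {..<fst D} \<and>
      card I = fst D - 1 \<and> card J = fst D - 1} \<subseteq> {0}"
    proof
      fix x assume "x \<in> {det (submatrix (coloring_matrix D) I J) | I J.
        I \<subseteq> {..<length (crossings D)} \<and> J \<subseteq> {..<fst D} \<and>
        card I = fst D - 1 \<and> card J = fst D - 1}"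
      then obtain I J where "x = det (submatrix (coloring_matrix D) I J)"
        "I \<subseteq> {..<length (crossings D)}" "J \<subseteq> {..<fst D}"
        "card I = fst D - 1" "card J = fst D - 1" by blast
      thus "x \<in> {0}" using minor_zero[OF gcol assms(3) _ _ _ _ ij(1,2) gij] by simp
    qed
    thus "Gcd {det (submatrix (coloring_matrix D) I J) | I J.
      I \<subseteq> {..<length (crossings D)} \<and> J \<subseteq> {..<fst D} \<and>
      card I = fst D - 1 \<and> card J = fst D - 1} = 0"
      by (simp add: Gcd_0_iff)
  qed
  thus False using assms(4) by simp
qed

end
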